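(* For all integers $t\ge0$ and $k\ge1$, \[m(2^{k+2}t+2^{k+1}-2)\ge m(t)+\frac{k}{2^k}.\]
   Context: $s(n)$ is the number of $1$s in the binary expansion of $n\ge0$; $\delta(j,t)=\lim_{N\to\infty}\frac1N|\{0\le n<N: s(n+t)-s(n)=j\}|$ for $j\in\mathbb Z$, a probability distribution on $\mathbb Z$, and $\kappa_j(t)$ denotes its $j$-th cumulant ($\log\sum_k\delta(k,t)e^{2\pi ik\vartheta}=\sum_{j\ge0}\frac{\kappa_j(t)}{j!}(2\pi i\vartheta)^j$ near $\vartheta=0$). Set $D(t)=\kappa_2(t)-\kappa_3(t)/3$ and $m(t)=\min\bigl(D(t),D(t+1)\bigr)$. *)

theory Defs
  imports "HOL-Analysis.Analysis"
begin

fun bsum :: "nat \<Rightarrow> nat" where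
  "bsum n = (if n = 0 then 0 else n mod 2 + bsum (n div 2))"

definition delta :: "int \<Rightarrow> nat \<Rightarrow> real" where
  "delta j t = lim (\<lambda>N. real (card {n. n < N \<and> int (bsum (n + t)) - int (bsum n) = j}) / real N)"

text \<open>Cumulants: log (sum_k delta(k,t) e^{k z}) = sum_j kappa_j(t)/j! z^j near z = 0
  (the paper's expansion with z = 2 pi i theta), so kappa_j(t) is the j-th derivative
  at 0 of the cumulant generating function.\<close>
definition cgf :: "nat \<Rightarrow> complex \<Rightarrow> complex" where
  "cgf t z = Ln (\<Sum>\<^sub>\<infinity>k\<in>(UNIV::int set). complex_of_real (delta k t) * exp (of_int k * z))"

definition kappa :: "nat \<Rightarrow> nat \<Rightarrow> real" where
  "kappa j t = Re ((deriv ^^ j) (cgf t) 0)"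

definition D :: "nat \<Rightarrow> real" where
  "D t = kappa 2 t - kappa 3 t / 3"

definition m :: "nat \<Rightarrow> real" where
  "m t = min (D t) (D (t + 1))"

end

theory Submission
  imports Defs "HOL-Complex_Analysis.Complex_Analysis"
begin


lemma bsum_0[simp]: "bsum 0 = 0" by simp

declare bsum.simps[simp del]

lemma bsum_even[simp]: "bsum (2*n) = bsum n"
proof (cases "n = 0")
  case False
  then show ?thesis by (subst bsum.simps) simp
qed simp

lemma bsum_odd[simp]: "bsum (2*n+1) = bsum n + 1"
  by (subst bsum.simps) simp

lemma bsum_odd'[simp]: "bsum (Suc (2*n)) = Suc (bsum n)"
  using bsum_odd[of n] by simp

lemma bsum_Suc_le: "bsum (n+1) \<le> bsum n + 1"
proof (induction n rule: less_induct)
  case (less n)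
  show ?case
  proof (cases "even n")
    case True
    then obtain m where "n = 2*m" by (auto elim: evenE)
    then show ?thesis by simp
  next
    case False
    then obtain m where n: "n = 2*m+1" by (auto elim: oddE)
    have "m < n" using n by simp
    from less[OF this] have "bsum (m+1) \<le> bsum m + 1" .
    moreover have "n + 1 = 2*(m+1)" using n by simp
    ultimately have "bsum (n+1) = bsum (m+1)" by (metis bsum_even)
    then show ?thesis using \<open>bsum (m+1) \<le> bsum m + 1\<close> n by simp
  qed
qed

definition cnt :: "int \<Rightarrow> nat \<Rightarrow> nat \<Rightarrow> nat" where
  "cnt j t N = card {n. n < N \<and> int (bsum (n + t)) - int (bsum n) = j}"

lemma nat_2m_neq: "2*(a::nat) \<noteq> Suc (2*b)" by presburger

lemma card_double:
  "card {n::nat. n < 2*M \<and> P n} = card {m. m < M \<and> P (2*m)} + card {m. m < M \<and> P (2*m+1)}"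
proof -
  have eq: "{n::nat. n < 2*M \<and> P n} = (\<lambda>m. 2*m) ` {m. m < M \<and> P (2*m)} \<union> (\<lambda>m. 2*m+1) ` {m. m < M \<and> P (2*m+1)}"
  proof (rule set_eqI, rule iffI)
    fix n assume "n \<in> {n::nat. n < 2*M \<and> P n}"
    then have n: "n < 2*M" "P n" by auto
    show "n \<in> (\<lambda>m. 2*m) ` {m. m < M \<and> P (2*m)} \<union> (\<lambda>m. 2*m+1) ` {m. m < M \<and> P (2*m+1)}"
    proof (cases "even n")
      case True
      then obtain m where "n = 2*m" by (auto elim: evenE)
      then show ?thesis using n by auto
    next
      case False
      then obtain m where "n = 2*m+1" by (auto elim: oddE)
      then show ?thesis using n by auto
    qed
  qed auto
  have d: "(\<lambda>m. 2*m) ` {m. m < M \<and> P (2*m)} \<inter> (\<lambda>m. 2*m+1) ` {m. m < M \<and> P (2*m+1)} = {}"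
    by auto (metis nat_2m_neq)
  show ?thesis unfolding eq
    by (subst card_Un_disjoint) (auto simp: d card_image inj_on_def nat_2m_neq)
qed

lemma card_Suc_lt:
  "card {n::nat. n < Suc N \<and> P n} = card {n. n < N \<and> P n} + (if P N then 1 else 0)"
proof -
  have "{n::nat. n < Suc N \<and> P n} = {n. n < N \<and> P n} \<union> (if P N then {N} else {})"
    by (auto simp: less_Suc_eq)
  then show ?thesis by (cases "P N") (auto simp: less_Suc_eq)
qed

lemma cnt_Suc: "cnt j t N \<le> cnt j t (Suc N) \<and> cnt j t (Suc N) \<le> cnt j t N + 1"
  unfolding cnt_def using card_Suc_lt[of N "\<lambda>n. int (bsum (n + t)) - int (bsum n) = j"] by simp

lemma cnt_even: "cnt j (2*t) (2*M) = 2 * cnt j t M"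
proof -
  have a: "(int (bsum (2*m + 2*t)) - int (bsum (2*m)) = j) \<longleftrightarrow> (int (bsum (m+t)) - int (bsum m) = j)" for m
  proof -
    have "2*m + 2*t = 2*(m+t)" by simp
    then have "bsum (2*m + 2*t) = bsum (m+t)" by (metis bsum_even)
    then show ?thesis by simp
  qed
  have b: "(int (bsum (2*m+1 + 2*t)) - int (bsum (2*m+1)) = j) \<longleftrightarrow> (int (bsum (m+t)) - int (bsum m) = j)" for m
  proof -
    have "2*m+1 + 2*t = 2*(m+t)+1" by simp
    then have "bsum (2*m+1 + 2*t) = bsum (m+t) + 1" by (metis bsum_odd)
    then show ?thesis by simp
  qed
  have e1: "{m. m < M \<and> int (bsum (2*m + 2*t)) - int (bsum (2*m)) = j} = {n. n < M \<and> int (bsum (n+t)) - int (bsum n) = j}"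
    using a by blast
  have e2: "{m. m < M \<and> int (bsum (2*m + 1 + 2*t)) - int (bsum (2*m+1)) = j} = {n. n < M \<and> int (bsum (n+t)) - int (bsum n) = j}"
    using b by blast
  have "cnt j (2*t) (2*M) = card {m. m < M \<and> int (bsum (2*m + 2*t)) - int (bsum (2*m)) = j} + card {m. m < M \<and> int (bsum (2*m + 1 + 2*t)) - int (bsum (2*m+1)) = j}"
    unfolding cnt_def by (rule card_double)
  also have "\<dots> = 2 * cnt j t M" unfolding e1 e2 cnt_def by simp
  finally show ?thesis .
qed

lemma cnt_odd: "cnt j (2*t+1) (2*M) = cnt (j-1) t M + cnt (j+1) (t+1) M"
proof -
  have a: "(int (bsum (2*m + (2*t+1))) - int (bsum (2*m)) = j) \<longleftrightarrow> (int (bsum (m+t)) - int (bsum m) = j - 1)" for m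
  proof -
    have "2*m + (2*t+1) = 2*(m+t)+1" by simp
    then have "bsum (2*m + (2*t+1)) = bsum (m+t) + 1" by (metis bsum_odd)
    then show ?thesis by simp linarith
  qed
  have b: "(int (bsum (2*m+1 + (2*t+1))) - int (bsum (2*m+1)) = j) \<longleftrightarrow> (int (bsum (m+(t+1))) - int (bsum m) = j + 1)" for m
  proof -
    have "2*m+1 + (2*t+1) = 2*(m+(t+1))" by simp
    then have "bsum (2*m+1 + (2*t+1)) = bsum (m+(t+1))" by (metis bsum_even)
    then show ?thesis by simp linarith
  qed
  show ?thesis unfolding cnt_def
    by (subst card_double) (simp only: a b)
qed

lemma cnt_zero: "cnt j 0 N = (if j = 0 then N else 0)"
  unfolding cnt_def by auto

lemma bsum_Suc_le_int: "int (bsum (n+1)) \<le> int (bsum n) + 1"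
  using bsum_Suc_le[of n] by linarith

lemma cnt_one_big: "j \<ge> 2 \<Longrightarrow> cnt j 1 N = 0"
  unfolding cnt_def using bsum_Suc_le_int by (auto) (smt (verit) bsum_Suc_le_int)


lemma sequentially_even_odd:
  assumes E: "eventually (\<lambda>n. P (2 * n)) sequentially" and O: "eventually (\<lambda>n. P (2 * n + 1)) sequentially"
  shows "eventually P sequentially"
proof -
  from E obtain n_e where [intro]: "\<And>n. n \<ge> n_e \<Longrightarrow> P (2 * n)"
    by (auto simp: eventually_sequentially)
  moreover
  from O obtain n_o where [intro]: "\<And>n. n \<ge> n_o \<Longrightarrow> P (Suc (2 * n))"
    by (auto simp: eventually_sequentially)
  show ?thesis
    unfolding eventually_sequentially
  proof (intro exI allI impI)
    fix n assume "max (2 * n_e) (2 * n_o + 1) \<le> n" then show "P n"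
      by (cases "even n") (auto elim!: evenE oddE )
  qed
qed

lemma limseq_even_odd:
  assumes "(\<lambda>n. f (2 * n)) \<longlonglongrightarrow> (l :: 'a :: topological_space)"
      and "(\<lambda>n. f (2 * n + 1)) \<longlonglongrightarrow> l"
  shows "f \<longlonglongrightarrow> l"
  using assms by (auto simp: filterlim_iff intro: sequentially_even_odd)

lemma lim_from_even:
  fixes c :: "nat \<Rightarrow> nat"
  assumes mono: "\<And>N. c N \<le> c (Suc N) \<and> c (Suc N) \<le> c N + 1"
  and lim: "(\<lambda>M. real (c (2*M)) / real M) \<longlonglongrightarrow> a"
  shows "(\<lambda>N. real (c N) / real N) \<longlonglongrightarrow> a/2"
proof (rule limseq_even_odd)
  have eq: "real (c (2*n)) / real (2*n) = (real (c (2*n)) / real n) / 2" for n by simp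
  show "(\<lambda>n. real (c (2*n)) / real (2*n)) \<longlonglongrightarrow> a/2"
    unfolding eq by (intro tendsto_divide lim tendsto_const) simp
next
  have h2: "(\<lambda>n. 1 / real (2*n+1)) \<longlonglongrightarrow> 0"
  proof (rule tendsto_sandwich[OF _ _ tendsto_const LIMSEQ_inverse_real_of_nat])
    show "\<forall>\<^sub>F n in sequentially. 0 \<le> 1 / real (2 * n + 1)" by simp
    show "\<forall>\<^sub>F n in sequentially. 1 / real (2 * n + 1) \<le> inverse (real (Suc n))"
      by (intro always_eventually allI) (simp add: field_simps)
  qed
  have h1: "(\<lambda>n. real n / real (2*n+1)) \<longlonglongrightarrow> 1/2"
  proof -
    have e: "real n / real (2*n+1) = 1/2 - (1/2) * (1 / real (2*n+1))" for n
      by (simp add: field_simps)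
    show ?thesis unfolding e using tendsto_diff[OF tendsto_const tendsto_mult[OF tendsto_const h2], of "1/2" "1/2"] by simp
  qed
  have L: "(\<lambda>n. (real (c (2*n)) / real n) * (real n / real (2*n+1))) \<longlonglongrightarrow> a * (1/2)"
    by (intro tendsto_mult lim h1)
  have L1: "(\<lambda>n. real (c (2*n)) / real (2*n+1)) \<longlonglongrightarrow> a/2"
  proof -
    have "\<forall>\<^sub>F n in sequentially. (real (c (2*n)) / real n) * (real n / real (2*n+1)) = real (c (2*n)) / real (2*n+1)"
      using eventually_gt_at_top[of "0::nat"] by eventually_elim simp
    from tendsto_cong[OF this] L show ?thesis by simp
  qed
  have L2: "(\<lambda>n. real (c (2*n)) / real (2*n+1) + 1 / real (2*n+1)) \<longlonglongrightarrow> a/2"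
    using tendsto_add[OF L1 h2] by simp
  show "(\<lambda>n. real (c (2*n+1)) / real (2*n+1)) \<longlonglongrightarrow> a/2"
  proof (rule tendsto_sandwich[OF _ _ L1 L2])
    show "\<forall>\<^sub>F n in sequentially. real (c (2 * n)) / real (2 * n + 1) \<le> real (c (2 * n + 1)) / real (2 * n + 1)"
    proof (intro always_eventually allI)
      fix n
      have "real (c (2 * n)) \<le> real (c (2 * n + 1))" using mono[of "2*n"] by simp
      then show "real (c (2 * n)) / real (2 * n + 1) \<le> real (c (2 * n + 1)) / real (2 * n + 1)"
        by (intro divide_right_mono) auto
    qed
    show "\<forall>\<^sub>F n in sequentially. real (c (2 * n + 1)) / real (2 * n + 1) \<le> real (c (2 * n)) / real (2 * n + 1) + 1 / real (2 * n + 1)"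
    proof (intro always_eventually allI)
      fix n
      have "real (c (2 * n + 1)) \<le> real (c (2 * n)) + 1" using mono[of "2*n"] by simp
      then have "real (c (2 * n + 1)) / real (2 * n + 1) \<le> (real (c (2 * n)) + 1) / real (2 * n + 1)"
        by (intro divide_right_mono) auto
      then show "real (c (2 * n + 1)) / real (2 * n + 1) \<le> real (c (2 * n)) / real (2 * n + 1) + 1 / real (2 * n + 1)"
        by (simp add: add_divide_distrib)
    qed
  qed
qed

definition q :: "int \<Rightarrow> nat \<Rightarrow> nat \<Rightarrow> real" where
  "q j t N = real (cnt j t N) / real N"

lemma q_even: assumes "q j t \<longlonglongrightarrow> L" shows "q j (2*t) \<longlonglongrightarrow> L"
proof -
  have "(\<lambda>M. real (cnt j (2*t) (2*M)) / real M) \<longlonglongrightarrow> 2 * L"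
    using tendsto_mult[OF tendsto_const[of 2] assms] by (simp add: cnt_even q_def)
  from lim_from_even[OF cnt_Suc this] show ?thesis by (simp add: q_def[abs_def])
qed

lemma q_odd: assumes "q (j-1) t \<longlonglongrightarrow> A" "q (j+1) (t+1) \<longlonglongrightarrow> B"
  shows "q j (2*t+1) \<longlonglongrightarrow> (A+B)/2"
proof -
  have e: "real (cnt j (2*t+1) (2*M)) / real M = q (j-1) t M + q (j+1) (t+1) M" for M
    by (simp only: cnt_odd q_def of_nat_add add_divide_distrib)
  have "(\<lambda>M. real (cnt j (2*t+1) (2*M)) / real M) \<longlonglongrightarrow> A + B"
    unfolding e by (rule tendsto_add[OF assms])
  from lim_from_even[OF cnt_Suc this] show ?thesis by (simp add: q_def[abs_def])
qed

lemma q_zero: "q j 0 \<longlonglongrightarrow> (if j = 0 then 1 else 0)"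
proof (cases "j = 0")
  case True
  have "\<forall>\<^sub>F N in sequentially. 1 = q j 0 N"
    using eventually_gt_at_top[of "0::nat"] by eventually_elim (simp add: q_def cnt_zero True)
  from tendsto_cong[OF this] have "((\<lambda>N. 1) \<longlongrightarrow> 1) sequentially \<longleftrightarrow> (q j 0 \<longlongrightarrow> 1) sequentially" by blast
  then show ?thesis using True by simp
next
  case False
  have "q j 0 = (\<lambda>N. 0)" by (rule ext) (simp add: q_def cnt_zero False)
  then show ?thesis using False by simp
qed

lemma q_one_big: assumes "j \<ge> 2" shows "q j 1 \<longlonglongrightarrow> 0"
proof -
  have "q j 1 = (\<lambda>N. 0)" by (rule ext) (simp only: q_def cnt_one_big[OF assms] of_nat_0 div_0)
  then show ?thesis by simp
qed

lemma q_one: "q (1 - int n) 1 \<longlonglongrightarrow> 1 / 2^(n+1)"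
proof (induction n)
  case 0
  have "q 1 (2*0+1) \<longlonglongrightarrow> (1+0)/2"
    by (rule q_odd) (use q_zero[of 0] q_one_big[of 2] in simp_all)
  then show ?case by simp
next
  case (Suc n)
  have "q (- int n) (2*0+1) \<longlonglongrightarrow> (0 + 1 / 2^(n+1))/2"
  proof (rule q_odd)
    show "q (- int n - 1) 0 \<longlonglongrightarrow> 0" using q_zero[of "- int n - 1"] by simp
    show "q (- int n + 1) (0 + 1) \<longlonglongrightarrow> 1 / 2 ^ (n + 1)" using Suc by (simp add: add.commute)
  qed
  then show ?case by simp
qed

lemma q_conv: "convergent (q j t)"
proof (induction t arbitrary: j rule: less_induct)
  case (less t)
  consider "t = 0" | "t = 1" | u where "t = 2*u" "u < t" | u where "t = 2*u+1" "u \<ge> 1"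
  proof -
    have "t = 0 \<or> t = 1 \<or> (\<exists>u. t = 2*u \<and> u < t) \<or> (\<exists>u. t = 2*u+1 \<and> u \<ge> 1)" by presburger
    then show ?thesis using that by blast
  qed
  then show ?case
  proof cases
    case 1 then show ?thesis using q_zero convergent_def by blast
  next
    case 2
    show ?thesis
    proof (cases "j \<ge> 2")
      case True then show ?thesis using 2 q_one_big convergent_def by blast
    next
      case False
      then have "j = 1 - int (nat (1 - j))" by simp
      then show ?thesis using 2 q_one[of "nat (1 - j)"] convergent_def by metis
    qed
  next
    case 3
    then show ?thesis using less(1)[of u j] q_even convergent_def by blast
  next
    case 4
    then have "u < t" "u + 1 < t" by auto
    then show ?thesis using less(1)[of u "j-1"] less(1)[of "u+1" "j+1"] q_odd[of j u] 4 convergent_def by blast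
  qed
qed

lemma delta_q: "delta j t = lim (q j t)"
  by (simp add: delta_def q_def[abs_def] cnt_def)

lemma q_delta: "q j t \<longlonglongrightarrow> delta j t"
  using q_conv delta_q convergent_LIMSEQ_iff by metis

lemma delta_even: "delta j (2*t) = delta j t"
  using LIMSEQ_unique[OF q_delta q_even[OF q_delta]] by simp

lemma delta_odd: "delta j (2*t+1) = (delta (j-1) t + delta (j+1) (t+1)) / 2"
  using LIMSEQ_unique[OF q_delta q_odd[OF q_delta q_delta]] by simp

lemma delta_zero: "delta j 0 = (if j = 0 then 1 else 0)"
  using LIMSEQ_unique[OF q_delta q_zero] by simp

lemma delta_one_big: "j \<ge> 2 \<Longrightarrow> delta j 1 = 0"
  using LIMSEQ_unique[OF q_delta q_one_big] by simp

lemma delta_one_big': "j \<ge> 2 \<Longrightarrow> delta j (Suc 0) = 0"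
  using delta_one_big by simp

lemma delta_one: "delta (1 - int n) 1 = 1 / 2^(n+1)"
  using LIMSEQ_unique[OF q_delta q_one] by simp


definition wt :: "nat \<Rightarrow> complex \<Rightarrow> int \<Rightarrow> complex" where
  "wt t z k = complex_of_real (delta k t) * exp (of_int k * z)"

definition G :: "nat \<Rightarrow> complex \<Rightarrow> complex" where
  "G t z = infsum (wt t z) UNIV"

lemma cgf_G: "cgf t = (\<lambda>z. Ln (G t z))"
  unfolding cgf_def G_def wt_def[abs_def] by simp

abbreviation BB :: "complex set" where "BB \<equiv> ball 0 (1/2)"

lemma norm_exp_minus_lt: assumes "z \<in> BB" shows "norm (exp (-z)) < 2"
proof -
  have n: "norm (-z) < 1/2" using assms by simp
  have "norm (exp (-z)) \<le> 1 + 2 * norm (-z)" by (rule exp_bound_lemma) (use n in simp)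
  also have "\<dots> < 2" using n by simp
  finally show ?thesis .
qed

lemma ne_BB: assumes z: "z \<in> BB" shows "2 - exp (-z) \<noteq> 0"
proof
  assume "2 - exp (-z) = 0"
  then have "exp (-z) = 2" by simp
  then have "norm (exp (-z)) = norm (2::complex)" by (rule arg_cong)
  with norm_exp_minus_lt[OF z] show False by simp
qed

lemma wt_even: "wt (2*t) = wt t"
  by (intro ext) (simp add: wt_def delta_even)

lemma G_even: "G (2*t) = G t"
  by (intro ext) (simp add: G_def wt_even)

lemma wt0_has: "(wt 0 z has_sum 1) UNIV"
  by (rule has_sum_finite_neutralI[of "{0}"]) (auto simp: wt_def delta_zero)

lemma G_zero: "G 0 z = 1"
  unfolding G_def using wt0_has infsumI by blast

lemma has_sum_shift:
  fixes f :: "int \<Rightarrow> complex"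
  assumes "(f has_sum S) UNIV"
  shows "((\<lambda>k. f (k + c)) has_sum S) UNIV"
proof -
  have im: "(\<lambda>k. k + c) ` UNIV = UNIV"
    by (metis (mono_tags, lifting) UNIV_I diff_add_cancel image_eqI subsetI subset_antisym)
  have "inj_on (\<lambda>k::int. k + c) UNIV" by (simp add: inj_on_def)
  from has_sum_reindex[OF this, of f S] assms im show ?thesis by (simp add: o_def)
qed

lemma wt1_summable: assumes z: "z \<in> BB" shows "wt 1 z summable_on UNIV"
proof -
  define x where "x = exp (-z) / 2"
  have nx: "norm x < 1" using norm_exp_minus_lt[OF z] by (simp add: x_def norm_divide)
  have "((\<lambda>n. x^n) has_sum (1 / (1 - x))) UNIV"
    by (rule norm_summable_imp_has_sum) (use nx in \<open>simp_all add: norm_power summable_geometric geometric_sums\<close>)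
  from has_sum_cmult_right[OF this, of "exp z / 2"]
  have h: "((\<lambda>n. exp z / 2 * x^n) has_sum (exp z / 2 * (1 / (1 - x)))) UNIV" .
  have eq: "(wt 1 z \<circ> (\<lambda>n::nat. 1 - int n)) n = exp z / 2 * x^n" for n
  proof -
    have "exp (of_int (1 - int n) * z) = exp (z + of_nat n * (-z))"
      by (rule arg_cong[where f=exp]) (simp add: algebra_simps)
    also have "\<dots> = exp z * exp (-z) ^ n" by (simp only: exp_add exp_of_nat_mult)
    finally have "exp (of_int (1 - int n) * z) = exp z * exp (-z) ^ n" .
    then show ?thesis
      unfolding o_def wt_def delta_one by (simp add: x_def power_divide field_simps)
  qed
  have inj: "inj_on (\<lambda>n::nat. 1 - int n) UNIV" by (simp add: inj_on_def)
  have "(wt 1 z has_sum (exp z / 2 * (1 / (1 - x)))) ((\<lambda>n::nat. 1 - int n) ` UNIV)"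
  proof -
    have f: "(wt 1 z \<circ> (\<lambda>n::nat. 1 - int n)) = (\<lambda>n. exp z / 2 * x^n)" by (rule ext) (rule eq)
    show ?thesis using h unfolding has_sum_reindex[OF inj] f .
  qed
  moreover have "(\<lambda>n::nat. 1 - int n) ` UNIV = {k. k \<le> 1}"
  proof (rule set_eqI, rule iffI)
    fix k :: int assume "k \<in> {k. k \<le> 1}"
    then have "k = 1 - int (nat (1 - k))" by simp
    then show "k \<in> range (\<lambda>n::nat. 1 - int n)" by blast
  qed auto
  ultimately have "(wt 1 z has_sum (exp z / 2 * (1 / (1 - x)))) {k. k \<le> 1}" by simp
  then have "(wt 1 z has_sum (exp z / 2 * (1 / (1 - x)))) UNIV"
    by (rule has_sum_cong_neutral[THEN iffD1, rotated -1]) (auto simp: wt_def delta_one_big')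
  then show ?thesis unfolding summable_on_def by blast
qed

lemma wt_odd: "wt (2*t+1) z k = exp z / 2 * wt t z (k-1) + exp (-z) / 2 * wt (t+1) z (k+1)"
proof -
  have e1: "exp (of_int k * z) = exp z * exp (of_int (k-1) * z)"
    by (simp add: exp_add[symmetric] algebra_simps)
  have e2: "exp (of_int k * z) = exp (-z) * exp (of_int (k+1) * z)"
    by (simp add: exp_add[symmetric] algebra_simps)
  have "wt (2*t+1) z k = complex_of_real (delta (k-1) t) / 2 * exp (of_int k * z) + complex_of_real (delta (k+1) (t+1)) / 2 * exp (of_int k * z)"
    unfolding wt_def delta_odd by (simp add: add_divide_distrib distrib_right)
  also have "\<dots> = exp z / 2 * wt t z (k-1) + exp (-z) / 2 * wt (t+1) z (k+1)"
    by (subst (1) e1, subst e2) (simp add: wt_def mult_ac)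
  finally show ?thesis .
qed

lemma wt_odd_has:
  assumes "(wt t z has_sum A) UNIV" "(wt (t+1) z has_sum B) UNIV"
  shows "(wt (2*t+1) z has_sum (exp z / 2 * A + exp (-z) / 2 * B)) UNIV"
proof -
  have a: "((\<lambda>k. exp z / 2 * wt t z (k + (-1))) has_sum (exp z / 2 * A)) UNIV"
    by (rule has_sum_cmult_right, rule has_sum_shift, rule assms(1))
  have b: "((\<lambda>k. exp (-z) / 2 * wt (t+1) z (k + 1)) has_sum (exp (-z) / 2 * B)) UNIV"
    by (rule has_sum_cmult_right, rule has_sum_shift, rule assms(2))
  have eqf: "wt (2*t+1) z = (\<lambda>k. exp z / 2 * wt t z (k + (-1)) + exp (-z) / 2 * wt (t+1) z (k + 1))"
    by (rule ext, subst wt_odd, simp)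
  show ?thesis unfolding eqf by (rule has_sum_add[OF a b])
qed

lemma wt_summable: assumes z: "z \<in> BB" shows "wt t z summable_on UNIV"
proof (induction t rule: less_induct)
  case (less t)
  consider "t = 0" | "t = 1" | u where "t = 2*u" "u < t" | u where "t = 2*u+1" "u \<ge> 1"
  proof -
    have "t = 0 \<or> t = 1 \<or> (\<exists>u. t = 2*u \<and> u < t) \<or> (\<exists>u. t = 2*u+1 \<and> u \<ge> 1)" by presburger
    then show ?thesis using that by blast
  qed
  then show ?case
  proof cases
    case 1 then show ?thesis using wt0_has summable_on_def by blast
  next
    case 2 then show ?thesis using wt1_summable[OF z] by simp
  next
    case 3 then show ?thesis using less(1)[of u] by (simp add: wt_even)
  next
    case 4
    then have "u < t" "u + 1 < t" by auto
    then show ?thesis using less(1)[of u] less(1)[of "u+1"] wt_odd_has[of u z] 4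
      unfolding summable_on_def by blast
  qed
qed

lemma G_has: "z \<in> BB \<Longrightarrow> (wt t z has_sum G t z) UNIV"
  unfolding G_def using wt_summable by (simp add: summable_iff_has_sum_infsum)

lemma G_odd: "z \<in> BB \<Longrightarrow> G (2*t+1) z = exp z / 2 * G t z + exp (-z) / 2 * G (t+1) z"
  using wt_odd_has[OF G_has G_has] G_has has_sum_unique by blast

lemma G_odd': "z \<in> BB \<Longrightarrow> G (Suc (2*t)) z = exp z / 2 * G t z + exp (-z) / 2 * G (t+1) z"
  using G_odd by simp

lemma G_one: assumes z: "z \<in> BB" shows "G 1 z = exp z / (2 - exp (-z))"
proof -
  have ne: "2 - exp (-z) \<noteq> 0" using ne_BB[OF z] .
  have "G 1 z = exp z / 2 + exp (-z) / 2 * G 1 z" using G_odd[OF z, of 0] by (simp add: G_zero)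
  then have "G 1 z * (2 - exp (-z)) = exp z" by (simp add: field_simps)
  then show ?thesis using ne by (simp add: field_simps)
qed

lemma G_holo: "G t holomorphic_on BB"
proof (induction t rule: less_induct)
  case (less t)
  consider "t = 0" | "t = 1" | u where "t = 2*u" "u < t" | u where "t = 2*u+1" "u \<ge> 1"
  proof -
    have "t = 0 \<or> t = 1 \<or> (\<exists>u. t = 2*u \<and> u < t) \<or> (\<exists>u. t = 2*u+1 \<and> u \<ge> 1)" by presburger
    then show ?thesis using that by blast
  qed
  then show ?case
  proof cases
    case 1 then show ?thesis by (simp add: G_zero[abs_def])
  next
    case 2
    have "(\<lambda>z. exp z / (2 - exp (-z))) holomorphic_on BB"
      using ne_BB by (intro holomorphic_intros) auto
    then have "G 1 holomorphic_on BB" by (rule holomorphic_transform) (simp only: G_one)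
    then show ?thesis using 2 by simp
  next
    case 3 then show ?thesis using less(1)[of u] by (simp add: G_even)
  next
    case 4
    then have "u < t" "u + 1 < t" by auto
    then have "(\<lambda>z. exp z / 2 * G u z + exp (-z) / 2 * G (u+1) z) holomorphic_on BB"
      using less(1)[of u] less(1)[of "u+1"] by (intro holomorphic_intros) auto
    then have "G (2*u+1) holomorphic_on BB" by (rule holomorphic_transform) (simp only: G_odd)
    then show ?thesis using 4 by simp
  qed
qed


lemma ln_derivs:
  fixes F :: "complex \<Rightarrow> complex"
  assumes holo: "F holomorphic_on S" and S: "open S" "0 \<in> S" and F0: "F 0 = 1" and F10: "deriv F 0 = 0"
  shows "(deriv ^^ 2) (\<lambda>z. Ln (F z)) 0 = (deriv ^^ 2) F 0"
    and "(deriv ^^ 3) (\<lambda>z. Ln (F z)) 0 = (deriv ^^ 3) F 0"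
proof -
  define T where "T = S \<inter> F -` ball 1 1"
  have T: "open T" unfolding T_def
    by (rule continuous_open_preimage) (use holo S holomorphic_on_imp_continuous_on in auto)
  have T0: "0 \<in> T" using S F0 by (simp add: T_def)
  have TS: "T \<subseteq> S" by (auto simp: T_def)
  have Fnz: "F z \<notin> \<real>\<^sub>\<le>\<^sub>0" "F z \<noteq> 0" if "z \<in> T" for z
  proof -
    have "dist 1 (F z) < 1" using that by (simp add: T_def)
    then have "Re (F z) > 0"
      by (smt (verit, best) complex_Re_le_cmod dist_complex_def minus_complex.simps(1) norm_minus_commute one_complex.simps(1))
    then show "F z \<notin> \<real>\<^sub>\<le>\<^sub>0" "F z \<noteq> 0" by (auto simp: complex_nonpos_Reals_iff)
  qed
  define F1 where "F1 = (deriv ^^ 1) F"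
  define F2 where "F2 = (deriv ^^ 2) F"
  define F3 where "F3 = (deriv ^^ 3) F"
  have dF: "(F has_field_derivative F1 z) (at z)" if "z \<in> S" for z
    using has_field_derivative_higher_deriv[OF holo S(1) that, of 0] by (simp add: F1_def)
  have dF1: "(F1 has_field_derivative F2 z) (at z)" if "z \<in> S" for z
    using has_field_derivative_higher_deriv[OF holo S(1) that, of 1] by (simp add: F1_def F2_def numeral_2_eq_2)
  have dF2: "(F2 has_field_derivative F3 z) (at z)" if "z \<in> S" for z
    using has_field_derivative_higher_deriv[OF holo S(1) that, of 2] by (simp add: F2_def F3_def numeral_3_eq_3)
  have F10': "F1 0 = 0" using F10 by (simp add: F1_def)
  have ev: "eventually (\<lambda>z. z \<in> T) (nhds 0)" using T T0 eventually_nhds_in_open by blast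
  have dL: "deriv (\<lambda>z. Ln (F z)) z = F1 z / F z" if "z \<in> T" for z
  proof -
    have "((\<lambda>z. Ln (F z)) has_field_derivative inverse (F z) * F1 z) (at z)"
      using dF[of z] that TS Fnz[OF that] by (auto intro!: derivative_eq_intros)
    then show ?thesis by (auto dest!: DERIV_imp_deriv simp: field_simps)
  qed
  have evL: "eventually (\<lambda>z. deriv (\<lambda>z. Ln (F z)) z = F1 z / F z) (nhds 0)"
    using ev by eventually_elim (rule dL)
  have dQ: "((\<lambda>z. F1 z / F z) has_field_derivative (F2 z * F z - F1 z * F1 z) / (F z)^2) (at z)" if "z \<in> T" for z
    using dF[of z] dF1[of z] that TS Fnz[OF that]
    by (auto intro!: derivative_eq_intros simp: power2_eq_square field_simps)
  have evQ: "eventually (\<lambda>z. deriv (\<lambda>z. F1 z / F z) z = (F2 z * F z - F1 z * F1 z) / (F z)^2) (nhds 0)"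
    using ev by eventually_elim (use dQ DERIV_imp_deriv in blast)
  have "(deriv ^^ 2) (\<lambda>z. Ln (F z)) 0 = deriv (deriv (\<lambda>z. Ln (F z))) 0"
    by (simp add: numeral_2_eq_2)
  also have "\<dots> = deriv (\<lambda>z. F1 z / F z) 0"
    by (rule deriv_cong_ev[OF evL refl])
  also have "\<dots> = (F2 0 * F 0 - F1 0 * F1 0) / (F 0)^2"
    using dQ[OF T0] by (rule DERIV_imp_deriv)
  also have "\<dots> = (deriv ^^ 2) F 0" by (simp add: F0 F10' F2_def)
  finally show "(deriv ^^ 2) (\<lambda>z. Ln (F z)) 0 = (deriv ^^ 2) F 0" .
  have dR: "((\<lambda>z. (F2 z * F z - F1 z * F1 z) / (F z)^2) has_field_derivative F3 0) (at 0)"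
  proof -
    have "((\<lambda>z. (F2 z * F z - F1 z * F1 z) / (F z)^2) has_field_derivative
       ((F3 0 * F 0 + F2 0 * F1 0 - (F2 0 * F1 0 + F1 0 * F2 0)) * (F 0)^2 - (F2 0 * F 0 - F1 0 * F1 0) * (2 * F 0 * F1 0)) / ((F 0)^2 * (F 0)^2)) (at 0)"
      using dF[of 0] dF1[of 0] dF2[of 0] S F0
      by (auto intro!: derivative_eq_intros simp: power2_eq_square)
    then show ?thesis by (simp add: F0 F10')
  qed
  have "(deriv ^^ 3) (\<lambda>z. Ln (F z)) 0 = deriv (deriv (deriv (\<lambda>z. Ln (F z)))) 0"
    by (simp add: numeral_3_eq_3)
  also have "\<dots> = deriv (deriv (\<lambda>z. F1 z / F z)) 0"
  proof -
    have "eventually (\<lambda>z. deriv (deriv (\<lambda>z. Ln (F z))) z = deriv (\<lambda>z. F1 z / F z) z) (nhds 0)"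
    proof -
      have "eventually (\<lambda>y. eventually (\<lambda>z. deriv (\<lambda>z. Ln (F z)) z = F1 z / F z) (nhds y)) (nhds 0)"
        using evL by (simp add: eventually_eventually)
      then show ?thesis by eventually_elim (rule deriv_cong_ev, simp_all)
    qed
    then show ?thesis by (rule deriv_cong_ev) simp
  qed
  also have "\<dots> = deriv (\<lambda>z. (F2 z * F z - F1 z * F1 z) / (F z)^2) 0"
    by (rule deriv_cong_ev[OF evQ refl])
  also have "\<dots> = F3 0" using dR by (rule DERIV_imp_deriv)
  finally show "(deriv ^^ 3) (\<lambda>z. Ln (F z)) 0 = (deriv ^^ 3) F 0" by (simp add: F3_def)
qed


lemma higher_deriv_cexp: "(deriv ^^ n) (\<lambda>z::complex. c * exp (a * z)) = (\<lambda>z. c * a^n * exp (a * z))"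
proof (induction n)
  case 0 then show ?case by simp
next
  case (Suc n)
  have "deriv (\<lambda>z. c * a^n * exp (a * z)) = (\<lambda>z. c * a^Suc n * exp (a * z))"
  proof
    fix z :: complex
    have "((\<lambda>z. c * a^n * exp (a * z)) has_field_derivative c * a^Suc n * exp (a * z)) (at z)"
      by (auto intro!: derivative_eq_intros simp: algebra_simps)
    then show "deriv (\<lambda>z. c * a^n * exp (a * z)) z = c * a^Suc n * exp (a * z)" by (rule DERIV_imp_deriv)
  qed
  then show ?case using Suc by simp
qed

definition A :: "nat \<Rightarrow> nat \<Rightarrow> complex" where
  "A n t = (deriv ^^ n) (G t) 0"

lemma BB_open: "open BB" by simp
lemma BB_0: "0 \<in> BB" by simp

lemma A_even: "A n (2*t) = A n t"
  by (simp add: A_def G_even)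

lemma A_odd: "A n (2*u+1) = (\<Sum>i=0..n. of_nat (n choose i) * (1/2) * A (n-i) u) + (\<Sum>i=0..n. of_nat (n choose i) * ((-1)^i/2) * A (n-i) (u+1))"
proof -
  define f1 where "f1 = (\<lambda>z::complex. (1/2) * exp (1 * z))"
  define f2 where "f2 = (\<lambda>z::complex. (1/2) * exp ((-1) * z))"
  have h1: "f1 holomorphic_on BB" unfolding f1_def by (intro holomorphic_intros)
  have h2: "f2 holomorphic_on BB" unfolding f2_def by (intro holomorphic_intros)
  have d1: "(deriv ^^ i) f1 0 = 1/2" for i unfolding f1_def higher_deriv_cexp by simp
  have d2: "(deriv ^^ i) f2 0 = (-1)^i/2" for i unfolding f2_def higher_deriv_cexp by simp
  have hu: "G u holomorphic_on BB" "G (u+1) holomorphic_on BB" by (rule G_holo)+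
  have "A n (2*u+1) = (deriv ^^ n) (\<lambda>z. f1 z * G u z + f2 z * G (u+1) z) 0"
    unfolding A_def
    by (rule higher_deriv_transform_within_open[OF G_holo _ BB_open BB_0])
       (use h1 h2 hu in \<open>auto intro!: holomorphic_intros simp: G_odd' f1_def f2_def\<close>)
  also have "\<dots> = (deriv ^^ n) (\<lambda>z. f1 z * G u z) 0 + (deriv ^^ n) (\<lambda>z. f2 z * G (u+1) z) 0"
    by (rule higher_deriv_add[OF _ _ BB_open BB_0]) (use h1 h2 hu in \<open>auto intro!: holomorphic_intros\<close>)
  also have "\<dots> = (\<Sum>i=0..n. of_nat (n choose i) * (1/2) * A (n-i) u) + (\<Sum>i=0..n. of_nat (n choose i) * ((-1)^i/2) * A (n-i) (u+1))"
    unfolding higher_deriv_mult[OF h1 hu(1) BB_open BB_0] higher_deriv_mult[OF h2 hu(2) BB_open BB_0] d1 d2 A_def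
    by (simp add: mult_ac)
  finally show ?thesis .
qed

lemma G_at0: "G t 0 = 1"
proof (induction t rule: less_induct)
  case (less t)
  consider "t = 0" | "t = 1" | u where "t = 2*u" "u < t" | u where "t = 2*u+1" "u \<ge> 1"
  proof -
    have "t = 0 \<or> t = 1 \<or> (\<exists>u. t = 2*u \<and> u < t) \<or> (\<exists>u. t = 2*u+1 \<and> u \<ge> 1)" by presburger
    then show ?thesis using that by blast
  qed
  then show ?case
  proof cases
    case 1 then show ?thesis by (simp add: G_zero)
  next
    case 2 then show ?thesis using G_one[of 0] by simp
  next
    case 3 then show ?thesis using less(1)[of u] by (simp add: G_even)
  next
    case 4
    then have "u < t" "u + 1 < t" by auto
    then show ?thesis using less(1)[of u] less(1)[of "u+1"] 4 G_odd[of 0 u] by simp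
  qed
qed

lemma A0: "A 0 t = 1" by (simp add: A_def G_at0)

lemma A_zero: "n \<ge> 1 \<Longrightarrow> A n 0 = 0"
proof -
  assume "n \<ge> 1"
  have "G 0 = (\<lambda>z. 1)" by (rule ext) (simp add: G_zero)
  then show ?thesis using \<open>n \<ge> 1\<close> by (simp add: A_def)
qed

lemma A1_odd: "A 1 (2*u+1) = (A 1 u + A 0 u)/2 + (A 1 (u+1) - A 0 (u+1))/2"
  using A_odd[of 1 u] by (simp add: field_simps)

lemma A2_odd: "A 2 (2*u+1) = (A 2 u + 2 * A 1 u + A 0 u)/2 + (A 2 (u+1) - 2 * A 1 (u+1) + A 0 (u+1))/2"
  using A_odd[of 2 u] by (simp add: numeral_2_eq_2 field_simps)

lemma A3_odd: "A 3 (2*u+1) = (A 3 u + 3 * A 2 u + 3 * A 1 u + A 0 u)/2 + (A 3 (u+1) - 3 * A 2 (u+1) + 3 * A 1 (u+1) - A 0 (u+1))/2"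
  unfolding A_odd by (simp add: numeral_3_eq_3 numeral_2_eq_2 field_simps)


lemma nat_cases4:
  fixes t :: nat
  obtains "t = 0" | "t = 1" | u where "t = 2*u" "u < t" | u where "t = 2*u+1" "u \<ge> 1"
proof -
  have "t = 0 \<or> t = 1 \<or> (\<exists>u. t = 2*u \<and> u < t) \<or> (\<exists>u. t = 2*u+1 \<and> u \<ge> 1)" by presburger
  then show ?thesis using that by blast
qed

lemma A1: "A 1 t = 0"
proof (induction t rule: less_induct)
  case (less t)
  show ?case
  proof (cases t rule: nat_cases4)
    case 1 then show ?thesis by (simp add: A_zero)
  next
    case 2
    have "A 1 1 = (A 1 0 + A 0 0)/2 + (A 1 1 - A 0 1)/2" using A1_odd[of 0] by simp
    then have "A 1 1 = A 1 1 / 2" by (simp add: A0 A_zero field_simps)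
    then show ?thesis using 2 by simp
  next
    case (3 u) then show ?thesis using less(1)[of u] by (simp add: A_even)
  next
    case (4 u)
    then have "u < t" "u + 1 < t" by auto
    then show ?thesis using less(1)[of u] less(1)[of "u+1"] 4 A1_odd[of u] by (simp add: A0)
  qed
qed

lemma A1'[simp]: "A (Suc 0) t = 0" using A1 by simp

definition a2 :: "nat \<Rightarrow> real" where "a2 t = Re (A 2 t)"
definition a3 :: "nat \<Rightarrow> real" where "a3 t = Re (A 3 t)"

lemma a2_even: "a2 (2*t) = a2 t" by (simp add: a2_def A_even)
lemma a3_even: "a3 (2*t) = a3 t" by (simp add: a3_def A_even)

lemma a2_odd: "a2 (2*u+1) = (a2 u + a2 (u+1))/2 + 1"
proof -
  have "A 2 (2*u+1) = (A 2 u + A 2 (u+1))/2 + 1" by (subst A2_odd) (simp add: A0 field_simps)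
  then show ?thesis by (simp add: a2_def)
qed

lemma a3_odd: "a3 (2*u+1) = (a3 u + a3 (u+1))/2 + 3/2 * (a2 u - a2 (u+1))"
proof -
  have "A 3 (2*u+1) = (A 3 u + A 3 (u+1))/2 + 3/2 * (A 2 u - A 2 (u+1))" by (subst A3_odd) (simp add: A0 field_simps)
  then show ?thesis by (simp add: a2_def a3_def)
qed

lemma a2_zero: "a2 0 = 0" by (simp add: a2_def A_zero)
lemma a3_zero: "a3 0 = 0" by (simp add: a3_def A_zero)

lemma a2_one: "a2 1 = 2"
proof -
  have "a2 1 = (a2 0 + a2 1)/2 + 1" using a2_odd[of 0] by simp
  then show ?thesis by (simp add: a2_zero)
qed

lemma absh: "\<bar>x\<bar> \<le> 2 \<Longrightarrow> (y::real) = x/2 + 1 \<Longrightarrow> \<bar>y\<bar> \<le> 2"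
  by (auto simp: abs_le_iff)
lemma absh2: "\<bar>x\<bar> \<le> 2 \<Longrightarrow> (y::real) = x/2 - 1 \<Longrightarrow> \<bar>y\<bar> \<le> 2"
  by (auto simp: abs_le_iff)

lemma a2_diff: "\<bar>a2 (t+1) - a2 t\<bar> \<le> 2"
proof (induction t rule: less_induct)
  case (less t)
  show ?case
  proof (cases "even t")
    case True
    show ?thesis
    proof (cases "t = 0")
      case True then show ?thesis using a2_one by (simp add: a2_zero)
    next
      case False
      from \<open>even t\<close> obtain u where u: "t = 2*u" by (auto elim: evenE)
      then have "u < t" using False by simp
      from less(1)[OF this] have "\<bar>a2 (u+1) - a2 u\<bar> \<le> 2" .
      moreover have "a2 (t+1) - a2 t = (a2 (u+1) - a2 u)/2 + 1" using u a2_odd[of u] a2_even[of u] by simp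
      ultimately show ?thesis by (rule absh)
    qed
  next
    case False
    from False obtain u where u: "t = 2*u+1" by (auto elim: oddE)
    then have "u < t" by simp
    from less(1)[OF this] have "\<bar>a2 (u+1) - a2 u\<bar> \<le> 2" .
    moreover have "t + 1 = 2*(u+1)" using u by simp
    then have "a2 (t+1) = a2 (u+1)" by (metis a2_even)
    moreover have "a2 t = (a2 u + a2 (u+1))/2 + 1" using u a2_odd by simp
    ultimately have "a2 (t+1) - a2 t = (a2 (u+1) - a2 u)/2 - 1" "\<bar>a2 (u+1) - a2 u\<bar> \<le> 2" by (auto simp: field_simps)
    then show ?thesis using absh2 by blast
  qed
qed

lemma kappa_a: "kappa 2 t = a2 t" "kappa 3 t = a3 t"
proof -
  have d: "deriv (G t) 0 = 0" using A1[of t] by (simp add: A_def)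
  note L = ln_derivs[OF G_holo BB_open BB_0 G_at0 d]
  show "kappa 2 t = a2 t" unfolding kappa_def cgf_G L(1) by (simp add: a2_def A_def)
  show "kappa 3 t = a3 t" unfolding kappa_def cgf_G L(2) by (simp add: a3_def A_def)
qed

lemma D_a: "D t = a2 t - a3 t / 3"
  by (simp add: D_def kappa_a)

lemma a2_pow: "a2 (2^i * x) = a2 x"
  by (induction i) (auto simp: mult.assoc a2_even)
lemma a3_pow: "a3 (2^i * x) = a3 x"
  by (induction i) (auto simp: mult.assoc a3_even)

definition y :: "nat \<Rightarrow> nat \<Rightarrow> nat" where "y t i = 2^(i+1)*t + 2^i - 1"

lemma y_Suc: "y t (Suc i) = 2 * y t i + 1"
proof -
  obtain q where q: "(2::nat)^i = Suc q" using not0_implies_Suc[of "(2::nat)^i"] by auto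
  have "y t (Suc i) = 4 * 2^i * t + 2 * 2^i - 1" by (simp add: y_def)
  also have "\<dots> = 4 * t * Suc q + 2 * q + 1" unfolding q by (simp add: algebra_simps)
  also have "\<dots> = 2 * y t i + 1" unfolding y_def by (simp add: q algebra_simps)
  finally show ?thesis .
qed

lemma y_plus1: "y t i + 1 = 2^i * (2*t+1)"
proof -
  have "(2::nat)^i \<ge> 1" by simp
  then show ?thesis unfolding y_def by (simp add: algebra_simps)
qed

lemma y_closed:
  fixes t i :: nat
  defines "C2 \<equiv> a2 (2*t+1)" and "C3 \<equiv> a3 (2*t+1)"
  shows "a2 (y t i) = C2 + 2 + (a2 t - C2 - 2) / 2^i \<and>
         a3 (y t i) = C3 + (a3 t - C3) / 2^i + 6 - 6 / 2^i + 3 * real i * (a2 t - C2 - 2) / 2^i"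
proof (induction i)
  case 0
  have "y t 0 = 2 * t" by (simp add: y_def)
  then show ?case by (simp add: a2_even a3_even)
next
  case (Suc i)
  have p2: "a2 (y t i + 1) = C2" unfolding y_plus1 a2_pow C2_def ..
  have p3: "a3 (y t i + 1) = C3" unfolding y_plus1 a3_pow C3_def ..
  have r2: "a2 (y t (Suc i)) = (a2 (y t i) + C2)/2 + 1" unfolding y_Suc a2_odd p2 ..
  have r3: "a3 (y t (Suc i)) = (a3 (y t i) + C3)/2 + 3/2 * (a2 (y t i) - C2)" unfolding y_Suc a3_odd p2 p3 ..
  from Suc have ih2: "a2 (y t i) = C2 + 2 + (a2 t - C2 - 2) / 2^i"
    and ih3: "a3 (y t i) = C3 + (a3 t - C3) / 2^i + 6 - 6 / 2^i + 3 * real i * (a2 t - C2 - 2) / 2^i" by auto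
  have g2: "a2 (y t (Suc i)) = C2 + 2 + (a2 t - C2 - 2) / 2^Suc i"
    unfolding r2 ih2 by (simp add: field_simps)
  have g3: "a3 (y t (Suc i)) = C3 + (a3 t - C3) / 2^Suc i + 6 - 6 / 2^Suc i + 3 * real (Suc i) * (a2 t - C2 - 2) / 2^Suc i"
    unfolding r3 ih2 ih3 by (simp add: field_simps)
  show ?case using g2 g3 by blast
qed

lemma key_ineq:
  fixes al be ga de u ii :: real
  assumes u: "0 < u" "u \<le> 1" and ii: "ii \<ge> 1" and ab: "al - be \<le> 2"
  defines "C2 \<equiv> (al + be)/2 + 1" and "C3 \<equiv> (ga + de)/2 + 3/2 * (al - be)"
  shows "(C2 + 2 + (al - C2 - 2) * u) - (C3 + (ga - C3) * u + 6 - 6 * u + 3 * ii * (al - C2 - 2) * u) / 3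
         \<ge> min (al - ga/3) (be - de/3) + 2 * ii * u"
proof -
  define s where "s = (al - be)/2"
  define dl where "dl = ((al - ga/3) - (be - de/3))/2"
  have s1: "s \<le> 1" using ab by (simp add: s_def)
  have eq: "(C2 + 2 + (al - C2 - 2) * u) - (C3 + (ga - C3) * u + 6 - 6 * u + 3 * ii * (al - C2 - 2) * u) / 3
     = ((al - ga/3) + (be - de/3))/2 + dl * u + 1 + (3 * ii - 1) * u - s - s * ((ii - 1) * u)"
    by (simp add: C2_def C3_def s_def dl_def field_simps)
  have h1: "s * ((ii - 1) * u) \<le> 1 * ((ii - 1) * u)"
    by (rule mult_right_mono[OF s1]) (use u ii in simp)
  have h2: "\<bar>dl\<bar> * u \<le> \<bar>dl\<bar>" using u by (simp add: mult_left_le)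
  have h3: "- (\<bar>dl\<bar> * u) \<le> dl * u"
  proof -
    have "-\<bar>dl\<bar> \<le> dl" by simp
    from mult_right_mono[OF this, of u] u show ?thesis by simp
  qed
  have mn: "min (al - ga/3) (be - de/3) = ((al - ga/3) + (be - de/3))/2 - \<bar>dl\<bar>"
    by (auto simp: dl_def min_def abs_if field_simps)
  show ?thesis unfolding eq mn using h1 h2 h3 s1 by (simp add: algebra_simps)
qed


lemma D_y: assumes i: "i \<ge> 1" shows "D (y t i) \<ge> m t + 2 * real i / 2^i"
proof -
  define al where "al = a2 t"
  define be where "be = a2 (t+1)"
  define ga where "ga = a3 t"
  define de where "de = a3 (t+1)"
  define u :: real where "u = 1 / 2^i"
  have u: "0 < u" "u \<le> 1" using i by (auto simp: u_def)
  have ii: "real i \<ge> 1" using i by simp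
  have ab: "al - be \<le> 2" using a2_diff[of t] by (simp add: al_def be_def abs_le_iff)
  have C2: "a2 (2*t+1) = (al + be)/2 + 1" unfolding al_def be_def by (rule a2_odd)
  have C3: "a3 (2*t+1) = (ga + de)/2 + 3/2 * (al - be)" unfolding al_def be_def ga_def de_def by (rule a3_odd)
  have divu: "x / 2^i = x * u" for x :: real by (simp add: u_def)
  note c = y_closed[of t i]
  have c1: "a2 (y t i) = ((al + be)/2 + 1) + 2 + (al - ((al + be)/2 + 1) - 2) * u"
    using conjunct1[OF c] unfolding C2 al_def[symmetric] divu .
  have c2: "a3 (y t i) = ((ga + de)/2 + 3/2 * (al - be)) + (ga - ((ga + de)/2 + 3/2 * (al - be))) * u + 6 - 6 * u
      + 3 * real i * (al - ((al + be)/2 + 1) - 2) * u"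
    using conjunct2[OF c] unfolding C2 C3 al_def[symmetric] ga_def[symmetric] divu .
  have Dy: "D (y t i) = (((al + be)/2 + 1) + 2 + (al - ((al + be)/2 + 1) - 2) * u) -
     (((ga + de)/2 + 3/2 * (al - be)) + (ga - ((ga + de)/2 + 3/2 * (al - be))) * u + 6 - 6 * u
      + 3 * real i * (al - ((al + be)/2 + 1) - 2) * u) / 3"
    unfolding D_a c1 c2 ..
  have mt: "m t = min (al - ga/3) (be - de/3)"
    by (simp add: m_def D_a al_def be_def ga_def de_def)
  have "2 * real i / 2^i = 2 * real i * u" by (simp add: u_def)
  then show ?thesis unfolding Dy mt using key_ineq[OF u ii ab, of ga de] by simp
qed

theorem corollary2p12:
  fixes t k :: nat
  assumes "k \<ge> 1"
  shows "m (2 ^ (k + 2) * t + 2 ^ (k + 1) - 2) \<ge> m t + real k / 2 ^ k"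
proof -
  have p: "(2::nat)^k \<ge> 1" by simp
  have N: "2 ^ (k + 2) * t + 2 ^ (k + 1) - 2 = 2 * y t k"
    unfolding y_def using p by (simp add: algebra_simps)
  have N1: "2 * y t k + 1 = y t (Suc k)" by (simp add: y_Suc)
  have mN: "m (2 ^ (k + 2) * t + 2 ^ (k + 1) - 2) = min (D (y t k)) (D (y t (Suc k)))"
    unfolding N m_def D_a a2_even a3_even N1 ..
  have d1: "D (y t k) \<ge> m t + real k / 2^k"
  proof -
    have "real k / 2^k \<le> 2 * real k / 2^k" by (simp add: divide_right_mono)
    then show ?thesis using D_y[OF assms, of t] by linarith
  qed
  have d2: "D (y t (Suc k)) \<ge> m t + real k / 2^k"
  proof -
    have "2 * real (Suc k) / 2^(Suc k) = real (Suc k) / 2^k" by (simp add: field_simps)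
    moreover have "real k / 2^k \<le> real (Suc k) / 2^k" by (simp add: divide_right_mono)
    ultimately show ?thesis using D_y[of "Suc k" t] by linarith
  qed
  show ?thesis unfolding mN using d1 d2 by simp
qed


end
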